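(* Let $\Delta\ge 4$ and $n\ge \Delta+2$ be integers. Consider the linear program in the real variables $m_{i,j}$, $1\le i\le j\le \Delta$: \[ \max \sum_{1\le i\le j\le \Delta} (i-j)^2\, m_{i,j} \] subject to \[ \sum_{1\le i\le j\le \Delta} \Bigl(\frac{1}{i}+\frac{1}{j}\Bigr) m_{i,j} = n,\qquad \sum_{1\le i\le j\le \Delta} m_{i,j} = n-1,\qquad m_{i,j}\ge 0 \ \text{ for all } 1\le i\le j\le \Delta. \] Then this problem admits a unique optimal solution, namely \[ m_{1,\Delta}=\frac{(\Delta-2)n+(\Delta+2)}{\Delta},\qquad m_{2,\Delta}=\frac{2(n-\Delta-1)}{\Delta}, \] and $m_{i,j}=0$ for all $(i,j)\notin\{(1,\Delta),(2,\Delta)\}$.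
   Context: This linear program is the relaxation of maximizing the $\sigma$-irregularity $\sigma(T)=\sum_{uv\in E(T)}(d(u)-d(v))^2$ over trees $T$ of order $n$ and maximum degree $\Delta$, where $m_{i,j}$ stands for the number of edges joining a vertex of degree $i$ to a vertex of degree $j$. *)

theory Defs
  imports Complex_Main
begin

text \<open>Index set of the LP variables m_{i,j}, 1 <= i <= j <= D.
  A point of the LP is a function m :: nat => nat => real; only its values on
  the index set matter.\<close>

definition idx :: "nat \<Rightarrow> (nat \<times> nat) set" where
  "idx D = {(i, j). 1 \<le> i \<and> i \<le> j \<and> j \<le> D}"

definition lp_obj :: "nat \<Rightarrow> (nat \<Rightarrow> nat \<Rightarrow> real) \<Rightarrow> real" where
  "lp_obj D m = (\<Sum>(i, j)\<in>idx D. (real i - real j)^2 * m i j)"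

definition lp_feasible :: "nat \<Rightarrow> nat \<Rightarrow> (nat \<Rightarrow> nat \<Rightarrow> real) \<Rightarrow> bool" where
  "lp_feasible D n m \<longleftrightarrow>
     (\<Sum>(i, j)\<in>idx D. (1 / real i + 1 / real j) * m i j) = real n \<and>
     (\<Sum>(i, j)\<in>idx D. m i j) = real n - 1 \<and>
     (\<forall>(i, j)\<in>idx D. m i j \<ge> 0)"

definition lp_optimal :: "nat \<Rightarrow> nat \<Rightarrow> (nat \<Rightarrow> nat \<Rightarrow> real) \<Rightarrow> bool" where
  "lp_optimal D n m \<longleftrightarrow> lp_feasible D n m \<and>
     (\<forall>m'. lp_feasible D n m' \<longrightarrow> lp_obj D m' \<le> lp_obj D m)"

end

theory Submission
  imports Defs
begin

definition ga :: "nat \<Rightarrow> real" where "ga D = 4 * real D - 6"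
definition gb :: "nat \<Rightarrow> real" where
  "gb D = (real D - 1)^2 - ga D * (real D + 1) / real D"
definition gg :: "nat \<Rightarrow> nat \<Rightarrow> nat \<Rightarrow> real" where
  "gg D i j = ga D * (1 / real i + 1 / real j) + gb D - (real i - real j)^2"

lemma gg_col:
  assumes "1 \<le> i" "i \<le> j" "j \<le> D" "D \<ge> 4"
  shows "gg D i j \<ge> gg D i D" and "j < D \<Longrightarrow> gg D i j > gg D i D"
proof -
  have j0: "real j > 0" "real D > 0" using assms by auto
  have eq: "gg D i j - gg D i D = (real D - real j) * (ga D / (real j * real D) + real D + real j - 2 * real i)"
    unfolding gg_def using j0 by (simp add: field_simps power2_eq_square)
  have a: "ga D > 0" unfolding ga_def using assms by simp
  have p: "ga D / (real j * real D) > 0" using a j0 by simp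
  have q: "real D + real j - 2 * real i \<ge> 0" using assms by simp
  have r: "real D - real j \<ge> 0" using assms by simp
  show "gg D i j \<ge> gg D i D" using eq p q r
    by (metis add_pos_nonneg diff_ge_0_iff_ge mult_nonneg_nonneg less_imp_le add.assoc add_diff_eq)
  show "gg D i j > gg D i D" if "j < D"
  proof -
    have "real D - real j > 0" using that by simp
    then have "(real D - real j) * (ga D / (real j * real D) + real D + real j - 2 * real i) > 0"
      using p q by (smt (verit) mult_pos_pos)
    then show ?thesis using eq by simp
  qed
qed

lemma gg_1: "D \<ge> 4 \<Longrightarrow> gg D 1 D = 0"
  unfolding gg_def gb_def by (simp add: field_simps power2_eq_square)

lemma gg_2: "D \<ge> 4 \<Longrightarrow> gg D 2 D = 0"
  unfolding gg_def gb_def ga_def by (simp add: field_simps power2_eq_square)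

lemma gg_row:
  assumes "3 \<le> i" "i \<le> D" "D \<ge> 4"
  shows "gg D i D > 0"
proof -
  have i0: "real i > 0" "real D > 0" using assms by auto
  have eq: "gg D i D - gg D 2 D = (real i - 2) * ((2 * real D - 2 - real i) - ga D / (2 * real i))"
    unfolding gg_def using i0 by (simp add: field_simps power2_eq_square)
  have key: "real i * (2 * real D - 2 - real i) > 2 * real D - 3"
  proof -
    have "real i * (2 * real D - 2 - real i) - (2 * real D - 3) = (real i - 3) * (real D - real i) + real i * (real D - 5) + real D + 3"
      by (simp add: algebra_simps)
    moreover have "(real i - 3) * (real D - real i) \<ge> 0" using assms by simp
    moreover have "real i * (real D - 5) + real D + 3 > 0"
    proof (cases "D \<ge> 5")
      case True then show ?thesis using i0 by (simp add: add_nonneg_pos)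
    next
      case False then have "D = 4" using assms by simp
      then show ?thesis using assms by simp
    qed
    ultimately show ?thesis by linarith
  qed
  have "ga D / (2 * real i) < 2 * real D - 2 - real i"
    unfolding ga_def using key i0 by (simp add: field_simps)
  then have "(real i - 2) * ((2 * real D - 2 - real i) - ga D / (2 * real i)) > 0"
    using assms by simp
  then show ?thesis using eq gg_2[OF assms(3)] by simp
qed

lemma gg_nonneg:
  assumes "(i, j) \<in> idx D" "D \<ge> 4"
  shows "gg D i j \<ge> 0"
proof -
  have h: "1 \<le> i" "i \<le> j" "j \<le> D" using assms unfolding idx_def by auto
  have "gg D i D \<ge> 0"
  proof (cases "i \<ge> 3")
    case True then show ?thesis using gg_row[of i D] h assms by simp
  next
    case False then have "i = 1 \<or> i = 2" using h by auto
    then show ?thesis using gg_1 gg_2 assms by auto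
  qed
  then show ?thesis using gg_col(1)[OF h assms(2)] by simp
qed

lemma gg_pos:
  assumes "(i, j) \<in> idx D" "D \<ge> 4" "(i, j) \<noteq> (1, D)" "(i, j) \<noteq> (2, D)"
  shows "gg D i j > 0"
proof -
  have h: "1 \<le> i" "i \<le> j" "j \<le> D" using assms unfolding idx_def by auto
  show ?thesis
  proof (cases "j < D")
    case True
    have "gg D i D \<ge> 0" using gg_nonneg[of i D D] h assms(2) unfolding idx_def by auto
    then show ?thesis using gg_col(2)[OF h assms(2) True] by simp
  next
    case False
    then have "j = D" using h by simp
    then have "i \<ge> 3" using assms h by auto
    then show ?thesis using gg_row[of i D] h assms \<open>j = D\<close> by simp
  qed
qed

lemma fin_idx: "finite (idx D)"
proof -
  have "idx D \<subseteq> {1..D} \<times> {1..D}" unfolding idx_def by auto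
  then show ?thesis by (rule finite_subset) auto
qed

lemma obj_identity:
  "lp_obj D m = ga D * (\<Sum>(i, j)\<in>idx D. (1 / real i + 1 / real j) * m i j)
     + gb D * (\<Sum>(i, j)\<in>idx D. m i j) - (\<Sum>(i, j)\<in>idx D. gg D i j * m i j)"
proof -
  have "(\<Sum>(i, j)\<in>idx D. gg D i j * m i j) =
     (\<Sum>(i, j)\<in>idx D. ga D * ((1 / real i + 1 / real j) * m i j) + gb D * m i j - (real i - real j)^2 * m i j)"
    by (rule sum.cong) (auto simp: gg_def algebra_simps)
  also have "\<dots> = ga D * (\<Sum>(i, j)\<in>idx D. (1 / real i + 1 / real j) * m i j)
     + gb D * (\<Sum>(i, j)\<in>idx D. m i j) - lp_obj D m"
    unfolding lp_obj_def by (simp add: sum.distrib sum_subtractf sum_distrib_left case_prod_unfold)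
  finally show ?thesis by simp
qed

lemma sum_two:
  assumes "D \<ge> 4" "\<forall>(i, j)\<in>idx D. (i, j) \<noteq> (1, D) \<and> (i, j) \<noteq> (2, D) \<longrightarrow> f i j = 0"
  shows "(\<Sum>(i, j)\<in>idx D. f i j) = f 1 D + f 2 D"
proof -
  have sub: "{(1, D), (2, D)} \<subseteq> idx D" using assms unfolding idx_def by auto
  have "(\<Sum>(i, j)\<in>idx D. f i j) = (\<Sum>(i, j)\<in>{(1, D), (2, D)}. f i j)"
    by (rule sum.mono_neutral_right[OF fin_idx sub]) (use assms in auto)
  then show ?thesis by simp
qed

theorem theorem3p2:
  fixes D n :: nat
  assumes "D \<ge> 4" and "n \<ge> D + 2"
  shows "\<forall>m. lp_optimal D n m \<longleftrightarrow>
           (\<forall>(i, j)\<in>idx D. m i j =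
              (if (i, j) = (1, D) then ((real D - 2) * real n + (real D + 2)) / real D
               else if (i, j) = (2, D) then 2 * (real n - real D - 1) / real D
               else 0))"
proof (intro allI)
  fix m :: "nat \<Rightarrow> nat \<Rightarrow> real"
  define m1 where "m1 = ((real D - 2) * real n + (real D + 2)) / real D"
  define m2 where "m2 = 2 * (real n - real D - 1) / real D"
  define V where "V = ga D * real n + gb D * (real n - 1)"
  have D0: "real D > 0" using assms by simp
  have m1nn: "m1 \<ge> 0" unfolding m1_def using assms by simp
  have m2nn: "m2 \<ge> 0" unfolding m2_def using assms by simp
  have bound: "lp_obj D m' = V - (\<Sum>(i, j)\<in>idx D. gg D i j * m' i j)" if "lp_feasible D n m'" for m'
    using that unfolding lp_feasible_def V_def by (simp add: obj_identity)
  have le: "lp_obj D m' \<le> V" if "lp_feasible D n m'" for m'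
  proof -
    have "(\<Sum>(i, j)\<in>idx D. gg D i j * m' i j) \<ge> 0"
      using that gg_nonneg[OF _ assms(1)] unfolding lp_feasible_def
      by (intro sum_nonneg) auto
    then show ?thesis using bound[OF that] by simp
  qed
  have good: "lp_optimal D n m' \<and> lp_obj D m' = V" if H: "\<forall>(i, j)\<in>idx D. m' i j =
              (if (i, j) = (1, D) then m1 else if (i, j) = (2, D) then m2 else 0)" for m'
  proof -
    have z: "\<forall>(i, j)\<in>idx D. (i, j) \<noteq> (1, D) \<and> (i, j) \<noteq> (2, D) \<longrightarrow> m' i j = 0"
      using H by auto
    have in1: "(1, D) \<in> idx D" and in2: "(2, D) \<in> idx D" using assms unfolding idx_def by auto
    have v1: "m' 1 D = m1" using H in1 by auto
    have v2: "m' 2 D = m2" using H in2 assms by auto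
    have s1': "(\<Sum>(i, j)\<in>idx D. (1 / real i + 1 / real j) * m' i j) = (1 / real (1::nat) + 1 / real D) * m' 1 D + (1 / real (2::nat) + 1 / real D) * m' 2 D"
      by (rule sum_two[OF assms(1)]) (use z in auto)
    have s1: "(\<Sum>(i, j)\<in>idx D. (1 / real i + 1 / real j) * m' i j) = (1 + 1 / real D) * m1 + (1/2 + 1 / real D) * m2"
      using s1' v1 v2 by simp
    have s2: "(\<Sum>(i, j)\<in>idx D. m' i j) = m1 + m2"
      using sum_two[OF assms(1), of "\<lambda>i j. m' i j"] z v1 v2 by auto
    have s3: "(\<Sum>(i, j)\<in>idx D. gg D i j * m' i j) = 0"
    proof -
      have "(\<Sum>(i, j)\<in>idx D. gg D i j * m' i j) = gg D 1 D * m' 1 D + gg D 2 D * m' 2 D"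
        by (rule sum_two[OF assms(1)]) (use z in auto)
      then show ?thesis using gg_1[OF assms(1)] gg_2[OF assms(1)] by simp
    qed
    have e1: "(1 + 1 / real D) * m1 + (1/2 + 1 / real D) * m2 = real n"
      unfolding m1_def m2_def using D0 by (simp add: field_simps)
    have e2: "m1 + m2 = real n - 1"
      unfolding m1_def m2_def using D0 by (simp add: field_simps)
    have nn: "\<forall>(i, j)\<in>idx D. m' i j \<ge> 0" using H m1nn m2nn by auto
    have F: "lp_feasible D n m'" unfolding lp_feasible_def using s1 s2 e1 e2 nn by simp
    show ?thesis unfolding lp_optimal_def using F le bound[OF F] s3 by simp
  qed
  show "lp_optimal D n m \<longleftrightarrow> (\<forall>(i, j)\<in>idx D. m i j =
              (if (i, j) = (1, D) then ((real D - 2) * real n + (real D + 2)) / real D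
               else if (i, j) = (2, D) then 2 * (real n - real D - 1) / real D
               else 0))"
  proof
    assume opt: "lp_optimal D n m"
    define ms where "ms = (\<lambda>(i::nat) (j::nat). if (i, j) = (1, D) then m1 else if (i, j) = (2, D) then m2 else (0::real))"
    have G: "lp_optimal D n ms \<and> lp_obj D ms = V" by (rule good) (simp add: ms_def)
    then have "lp_optimal D n ms" "lp_obj D ms = V" by auto
    moreover have F: "lp_feasible D n m" using opt unfolding lp_optimal_def by simp
    ultimately have "lp_obj D m \<ge> V" using opt \<open>lp_optimal D n ms\<close> unfolding lp_optimal_def by metis
    then have S0: "(\<Sum>(i, j)\<in>idx D. gg D i j * m i j) = 0"
      using bound[OF F] le[OF F]
      using F gg_nonneg[OF _ assms(1)] unfolding lp_feasible_def
      by (smt (verit, best) case_prod_conv mult_nonneg_nonneg split_cong sum_nonneg)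
    have nnt: "\<forall>x\<in>idx D. (\<lambda>(i, j). gg D i j * m i j) x \<ge> 0"
      using F gg_nonneg[OF _ assms(1)] unfolding lp_feasible_def by auto
    have allz: "\<forall>x\<in>idx D. (\<lambda>(i, j). gg D i j * m i j) x = 0"
      using sum_nonneg_eq_0_iff[OF fin_idx[of D], of "\<lambda>(i, j). gg D i j * m i j"] nnt S0 by auto
    have z0: "m i j = 0" if ij: "(i, j) \<in> idx D" "(i, j) \<noteq> (1, D)" "(i, j) \<noteq> (2, D)" for i j
    proof -
      have "gg D i j > 0" using gg_pos[OF ij(1) assms(1) ij(2,3)] .
      moreover have "gg D i j * m i j = 0" using allz ij(1) by auto
      ultimately show "m i j = 0" by simp
    qed
    have z: "\<forall>(i, j)\<in>idx D. (i, j) \<noteq> (1, D) \<and> (i, j) \<noteq> (2, D) \<longrightarrow> m i j = 0"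
      using z0 by blast
    have s1': "(\<Sum>(i, j)\<in>idx D. (1 / real i + 1 / real j) * m i j) = (1 / real (1::nat) + 1 / real D) * m 1 D + (1 / real (2::nat) + 1 / real D) * m 2 D"
      by (rule sum_two[OF assms(1)]) (use z in auto)
    have s1: "(1 + 1 / real D) * m 1 D + (1/2 + 1 / real D) * m 2 D = real n"
      using s1' F unfolding lp_feasible_def by simp
    have s2: "m 1 D + m 2 D = real n - 1"
      using sum_two[OF assms(1), of "\<lambda>i j. m i j"] z F unfolding lp_feasible_def by auto
    have e1: "(1 + 1 / real D) * m1 + (1/2 + 1 / real D) * m2 = real n"
      unfolding m1_def m2_def using D0 by (simp add: field_simps)
    have e2: "m1 + m2 = real n - 1"
      unfolding m1_def m2_def using D0 by (simp add: field_simps)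
    have d1: "(m 1 D - m1) * (1 + 1 / real D) + (m 2 D - m2) * (1/2 + 1 / real D) = 0"
      using s1 e1 by (simp add: algebra_simps)
    have d2: "m 2 D - m2 = - (m 1 D - m1)" using s2 e2 by simp
    have "(m 1 D - m1) * (1 + 1 / real D) + (- (m 1 D - m1)) * (1/2 + 1 / real D) = 0"
      using d1 d2 by metis
    moreover have "x * (1 + c) + (- x) * (1/2 + c) = x * (1/2)" for x c :: real
      by (simp add: algebra_simps)
    ultimately have "(m 1 D - m1) * (1/2) = 0" by metis
    then have "m 1 D - m1 = 0" by simp
    then have v1: "m 1 D = m1" by simp
    then have v2: "m 2 D = m2" using s2 e2 by simp
    show "\<forall>(i, j)\<in>idx D. m i j =
              (if (i, j) = (1, D) then ((real D - 2) * real n + (real D + 2)) / real D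
               else if (i, j) = (2, D) then 2 * (real n - real D - 1) / real D
               else 0)"
      using z v1 v2 unfolding m1_def m2_def by auto
  next
    assume "\<forall>(i, j)\<in>idx D. m i j =
              (if (i, j) = (1, D) then ((real D - 2) * real n + (real D + 2)) / real D
               else if (i, j) = (2, D) then 2 * (real n - real D - 1) / real D
               else 0)"
    then show "lp_optimal D n m" using good unfolding m1_def m2_def by auto
  qed
qed

end
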